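(* Let $\mathcal G$ be a Lie superalgebra over a field of characteristic zero with bracket $[\cdot,\cdot]$, and let $\mathcal U_{1-}=\bigoplus_{p\ge0}\mathcal U_{1-p}$ be the space of operators on $\mathcal U_1=\mathcal G$ described below, equipped with the extended bracket $[\cdot,\cdot]$ described below. Then $(\mathcal U_{1-},[\cdot,\cdot])$ is a Lie superalgebra.
   Context: Set $\mathcal U_1=\mathcal G=\mathcal G^{(0)}\oplus\mathcal G^{(1)}$ (its $\mathbb Z_2$-grading). For $p\ge1$ define recursively $\mathcal U_{-p+1}=\mathrm{Hom}(\mathcal U_1,\mathcal U_{-p+2})$ (all linear maps), $\mathbb Z_2$-graded by declaring $A$ even (resp. odd) if it maps $\mathcal U_1^{(i)}$ into $\mathcal U_{-p+2}^{(i)}$ (resp. $\mathcal U_{-p+2}^{(i+1)}$). $|u|$ denotes the parity of a homogeneous element; sign formulas are for homogeneous elements and are extended bilinearly. Elements of $\mathcal U_{1-p}$ are operators of order $p$ (elements of $\mathcal G$ have order $0$). Define $\circ$: for an operator $A$ of order $p\ge1$ and $y\in\mathcal U_1$, $A\circ y=A(y)$ and $y\circ A=0$; for operators $A,B$ of orders $\ge1$, recursively $(A\circ B)(x)=A\circ B(x)+(-1)^{|B||x|}A(x)\circ B$ for $x\in\mathcal U_1$. Define $\bullet$ on $\mathcal U_{1-}$: for $A_p,B_q$ of orders $p,q\ge1$, $A_p\bullet B_q=\frac{p!\,q!}{(p+q-1)!}A_p\circ B_q$; $A_p\bullet x=pA_p(x)$ and $x\bullet A_p=0$ for $x\in\mathcal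 U_1$; and $x\bullet y=0$ for $x,y\in\mathcal U_1$. The bracket of $\mathcal G$ is extended to $\mathcal U_{1-}$ as follows: on order-$0$ elements it is the bracket of $\mathcal G$; for operators $A,B$ of orders $p,q$ with $p+q\ge1$, $[A,B]$ is the operator of order $p+q$ (of parity $|A|+|B|$) defined recursively by $[A,B]\bullet x=[A,B\bullet x]+(-1)^{|x||B|}[A\bullet x,B]$ for all $x\in\mathcal G$. *)

theory Defs
  imports Complex_Main "HOL-Library.Function_Algebras"
begin

text \<open>Parities are booleans: False = even, True = odd. The sign (-1)^(|a||b|)
  is realised by sgnb.\<close>

definition sgnb :: "bool \<Rightarrow> 'v::ab_group_add \<Rightarrow> 'v" where
  "sgnb b v = (if b then - v else v)"

definition gpart :: "'v set \<Rightarrow> 'v set \<Rightarrow> bool \<Rightarrow> 'v set" where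
  "gpart V0 V1 b = (if b then V1 else V0)"

definition lie_superalgebra ::
  "('k::field \<Rightarrow> 'v::ab_group_add \<Rightarrow> 'v) \<Rightarrow> 'v set \<Rightarrow> 'v set \<Rightarrow> 'v set
     \<Rightarrow> ('v \<Rightarrow> 'v \<Rightarrow> 'v) \<Rightarrow> bool" where
  "lie_superalgebra scale V V0 V1 br \<longleftrightarrow>
     vector_space scale \<and>
     Modules.module.subspace scale V0 \<and> Modules.module.subspace scale V1 \<and>
     V0 \<inter> V1 = {0} \<and> V = {a + b | a b. a \<in> V0 \<and> b \<in> V1} \<and>
     (\<forall>a\<in>V. \<forall>b\<in>V. br a b \<in> V) \<and>
     (\<forall>a\<in>V. \<forall>b\<in>V. \<forall>c\<in>V. br (a + b) c = br a c + br b c \<and>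
                          br c (a + b) = br c a + br c b) \<and>
     (\<forall>k. \<forall>a\<in>V. \<forall>b\<in>V. br (scale k a) b = scale k (br a b) \<and>
                        br a (scale k b) = scale k (br a b)) \<and>
     (\<forall>i j a b. a \<in> gpart V0 V1 i \<longrightarrow> b \<in> gpart V0 V1 j \<longrightarrow>
                 br a b \<in> gpart V0 V1 (i \<noteq> j)) \<and>
     (\<forall>i j a b. a \<in> gpart V0 V1 i \<longrightarrow> b \<in> gpart V0 V1 j \<longrightarrow>
                 br a b = - sgnb (i \<and> j) (br b a)) \<and>
     (\<forall>i j k a b c. a \<in> gpart V0 V1 i \<longrightarrow> b \<in> gpart V0 V1 j \<longrightarrow> c \<in> gpart V0 V1 k \<longrightarrow>
                 br a (br b c) = br (br a b) c + sgnb (i \<and> j) (br b (br a c)))"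

text \<open>An operator of order p (element of U_{1-p}, an iterated Hom) is represented
  as the associated p-multilinear map G^p \<rightarrow> G, i.e. its values on lists of length p:
  A(x1)(x2)...(xp) = A [x1,...,xp].  An element of the direct sum U_{1-} is a function
  u on all lists whose restriction to lists of length p is the order-p component;
  only finitely many components are nonzero.\<close>

definition Uspace :: "('k::field \<Rightarrow> 'g::ab_group_add \<Rightarrow> 'g) \<Rightarrow> ('g list \<Rightarrow> 'g) set" where
  "Uspace scale = {u.
     (\<forall>xs ys a b. u (xs @ (a + b) # ys) = u (xs @ a # ys) + u (xs @ b # ys)) \<and>
     (\<forall>xs ys c a. u (xs @ scale c a # ys) = scale c (u (xs @ a # ys))) \<and>
     finite {length xs | xs. u xs \<noteq> 0}}"

definition uscale :: "('k \<Rightarrow> 'g \<Rightarrow> 'g) \<Rightarrow> 'k \<Rightarrow> ('g list \<Rightarrow> 'g) \<Rightarrow> ('g list \<Rightarrow> 'g)" where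
  "uscale scale c u = (\<lambda>xs. scale c (u xs))"

definition parsum :: "bool list \<Rightarrow> bool" where
  "parsum es = foldr (\<lambda>a b. a \<noteq> b) es False"

text \<open>Parity-b part of U_{1-}: A is of parity b iff A(x1..xp) has parity b + |x1|+...+|xp|
  for homogeneous x1..xp (the recursive definition of the grading, unfolded).\<close>

definition Upart :: "('k::field \<Rightarrow> 'g::ab_group_add \<Rightarrow> 'g) \<Rightarrow> 'g set \<Rightarrow> 'g set \<Rightarrow> bool
     \<Rightarrow> ('g list \<Rightarrow> 'g) set" where
  "Upart scale G0 G1 b = {u \<in> Uspace scale.
     \<forall>xs es. length es = length xs \<and> (\<forall>i<length xs. xs ! i \<in> gpart G0 G1 (es ! i))
        \<longrightarrow> u xs \<in> gpart G0 G1 (b \<noteq> parsum es)}"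

definition gproj :: "'g::ab_group_add set \<Rightarrow> 'g set \<Rightarrow> bool \<Rightarrow> 'g \<Rightarrow> 'g" where
  "gproj G0 G1 b x = (THE y. y \<in> gpart G0 G1 b \<and> x - y \<in> gpart G0 G1 (\<not> b))"

fun opproj :: "'g::ab_group_add set \<Rightarrow> 'g set \<Rightarrow> bool \<Rightarrow> ('g list \<Rightarrow> 'g) \<Rightarrow> 'g list \<Rightarrow> 'g" where
  "opproj G0 G1 b A [] = gproj G0 G1 b (A [])"
| "opproj G0 G1 b A (x # xs) =
     opproj G0 G1 b (\<lambda>zs. A (gproj G0 G1 False x # zs)) xs
   + opproj G0 G1 (\<not> b) (\<lambda>zs. A (gproj G0 G1 True x # zs)) xs"

text \<open>Extended bracket [A,B] of an order-p operator A and an order-q operator B,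
  as an order-(p+q) operator, by the recursion
  [A,B]\<bullet>x = [A, B\<bullet>x] + (-1)^(|x||B|) [A\<bullet>x, B], where [A,B]\<bullet>x = (p+q)[A,B](x),
  A\<bullet>x = p A(x) for p \<ge> 1 and y\<bullet>x = 0 for y \<in> G; extended bilinearly
  (x and B are split into homogeneous parts).\<close>

fun brop :: "('k::field_char_0 \<Rightarrow> 'g::ab_group_add \<Rightarrow> 'g) \<Rightarrow> 'g set \<Rightarrow> 'g set \<Rightarrow> ('g \<Rightarrow> 'g \<Rightarrow> 'g)
     \<Rightarrow> nat \<Rightarrow> nat \<Rightarrow> ('g list \<Rightarrow> 'g) \<Rightarrow> ('g list \<Rightarrow> 'g) \<Rightarrow> 'g list \<Rightarrow> 'g" where
  "brop scale G0 G1 br p q A B [] = br (A []) (B [])"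
| "brop scale G0 G1 br p q A B (x # ys) =
     scale (1 / of_nat (p + q))
      ((if q = 0 then 0
        else scale (of_nat q) (brop scale G0 G1 br p (q - 1) A (\<lambda>zs. B (x # zs)) ys))
     + (if p = 0 then 0
        else scale (of_nat p)
          (\<Sum>i\<in>(UNIV::bool set). \<Sum>j\<in>(UNIV::bool set).
             sgnb (i \<and> j) (brop scale G0 G1 br (p - 1) q
                (\<lambda>zs. A (gproj G0 G1 i x # zs)) (opproj G0 G1 j B) ys))))"

definition ubracket :: "('k::field_char_0 \<Rightarrow> 'g::ab_group_add \<Rightarrow> 'g) \<Rightarrow> 'g set \<Rightarrow> 'g set
     \<Rightarrow> ('g \<Rightarrow> 'g \<Rightarrow> 'g) \<Rightarrow> ('g list \<Rightarrow> 'g) \<Rightarrow> ('g list \<Rightarrow> 'g) \<Rightarrow> ('g list \<Rightarrow> 'g)" where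
  "ubracket scale G0 G1 br u v =
     (\<lambda>xs. \<Sum>p\<in>{0..length xs}. brop scale G0 G1 br p (length xs - p) u v xs)"

end

theory Submission
  imports Defs
begin


lemma sgnb_simps[simp]: "sgnb False v = v" "sgnb True v = - v"
  by (auto simp: sgnb_def)

lemma sum_UNIV_bool: "(\<Sum>i\<in>(UNIV::bool set). f i) = f False + f True"
  by (simp add: UNIV_bool add.commute)

locale LSA =
  fixes scale :: "'k::field_char_0 \<Rightarrow> 'g::ab_group_add \<Rightarrow> 'g"
    and G0 G1 :: "'g set" and br :: "'g \<Rightarrow> 'g \<Rightarrow> 'g"
  assumes LS: "lie_superalgebra scale UNIV G0 G1 br"
begin

sublocale vs: vector_space scale
  using LS by (simp add: lie_superalgebra_def)

abbreviation P where "P \<equiv> gpart G0 G1"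
abbreviation pr where "pr \<equiv> gproj G0 G1"

lemma sub0: "vs.subspace G0"
  using LS unfolding lie_superalgebra_def by (elim conjE) assumption
lemma sub1: "vs.subspace G1"
  using LS unfolding lie_superalgebra_def by (elim conjE) assumption

lemma subP: "vs.subspace (P b)"
  using sub0 sub1 by (cases b) (simp_all add: gpart_def)

lemma P_0[simp]: "0 \<in> P b" using subP[of b] vs.subspace_0 by blast
lemma P_add[intro]: "x \<in> P b \<Longrightarrow> y \<in> P b \<Longrightarrow> x + y \<in> P b"
  using subP[of b] vs.subspace_add by blast
lemma P_scale[intro]: "x \<in> P b \<Longrightarrow> scale c x \<in> P b"
  using subP[of b] vs.subspace_scale by blast
lemma P_neg[intro]: "x \<in> P b \<Longrightarrow> - x \<in> P b"
  using subP[of b] vs.subspace_neg by blast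
lemma P_diff[intro]: "x \<in> P b \<Longrightarrow> y \<in> P b \<Longrightarrow> x - y \<in> P b"
  using subP[of b] vs.subspace_diff by blast
lemma P_sgnb[intro]: "x \<in> P b \<Longrightarrow> sgnb c x \<in> P b"
  by (auto simp: sgnb_def)
lemma P_eq: "x \<in> P b \<Longrightarrow> b = b' \<Longrightarrow> x \<in> P b'" by simp

lemma inter0: "G0 \<inter> G1 = {0}"
  using LS unfolding lie_superalgebra_def by (elim conjE) assumption

lemma P_both: "x \<in> P b \<Longrightarrow> x \<in> P (\<not> b) \<Longrightarrow> x = 0"
  using inter0 by (cases b) (auto simp: gpart_def)

lemma decomp: "\<exists>a b. a \<in> G0 \<and> b \<in> G1 \<and> x = a + b"
proof -
  have U: "(UNIV::'g set) = {a + b | a b. a \<in> G0 \<and> b \<in> G1}"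
    using LS unfolding lie_superalgebra_def by (elim conjE) assumption
  have "x \<in> (UNIV::'g set)" by simp
  then show ?thesis by (subst (asm) U) blast
qed

lemma decompP: "\<exists>z w. z \<in> P b \<and> w \<in> P (\<not> b) \<and> x = z + w"
proof -
  obtain a c where ac: "a \<in> G0" "c \<in> G1" "x = a + c" using decomp by blast
  show ?thesis
  proof (cases b)
    case True
    then show ?thesis using ac by (intro exI[of _ c] exI[of _ a]) (auto simp: gpart_def)
  next
    case False
    then show ?thesis using ac by (intro exI[of _ a] exI[of _ c]) (auto simp: gpart_def)
  qed
qed

lemma pr_ex: "\<exists>!y. y \<in> P b \<and> x - y \<in> P (\<not> b)"
proof -
  obtain z w where zw: "z \<in> P b" "w \<in> P (\<not> b)" "x = z + w" using decompP by blast
  show ?thesis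
  proof (rule ex1I[of _ z])
    show "z \<in> P b \<and> x - z \<in> P (\<not> b)" using zw by simp
    fix y assume y: "y \<in> P b \<and> x - y \<in> P (\<not> b)"
    have 1: "y - z \<in> P b" using y zw by auto
    have eq: "y - z = w - (x - y)" using zw by (simp add: algebra_simps)
    have "w - (x - y) \<in> P (\<not> b)" using y zw(2) by blast
    then have "y - z \<in> P (\<not> b)" by (subst eq)
    with 1 have "y - z = 0" using P_both by blast
    then show "y = z" by simp
  qed
qed

lemma pr_prop: "pr b x \<in> P b \<and> x - pr b x \<in> P (\<not> b)"
  unfolding gproj_def by (rule theI'[OF pr_ex])

lemma pr_P[simp, intro]: "pr b x \<in> P b" using pr_prop by blast

lemma pr_uniq: "y \<in> P b \<Longrightarrow> x - y \<in> P (\<not> b) \<Longrightarrow> pr b x = y"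
proof -
  assume a: "y \<in> P b" "x - y \<in> P (\<not> b)"
  obtain z where z: "\<And>y. y \<in> P b \<and> x - y \<in> P (\<not> b) \<Longrightarrow> y = z" using pr_ex[of b x] by blast
  show ?thesis using z[OF conjI[OF a]] z[OF pr_prop] by simp
qed

lemma pr_id: "x \<in> P b \<Longrightarrow> pr b x = x"
  by (rule pr_uniq) auto

lemma pr_zero: "x \<in> P (\<not> b) \<Longrightarrow> pr b x = 0"
  by (rule pr_uniq) auto

lemma pr_zero': "x \<in> P b \<Longrightarrow> pr (\<not> b) x = 0"
  by (rule pr_zero) simp

lemma pr_sum: "pr False x + pr True x = x"
proof -
  have "x - pr False x \<in> P True" using pr_prop[of False x] by simp
  then have "pr True x = x - pr False x" by (intro pr_uniq) auto
  then show ?thesis by simp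
qed

lemma pr_add: "pr b (x + y) = pr b x + pr b y"
proof (rule pr_uniq)
  show "pr b x + pr b y \<in> P b" by auto
  have "x + y - (pr b x + pr b y) = (x - pr b x) + (y - pr b y)" by (simp add: algebra_simps)
  then show "x + y - (pr b x + pr b y) \<in> P (\<not> b)" using pr_prop by (metis P_add)
qed

lemma pr_scale: "pr b (scale c x) = scale c (pr b x)"
proof (rule pr_uniq)
  show "scale c (pr b x) \<in> P b" by auto
  have "scale c x - scale c (pr b x) = scale c (x - pr b x)" by (simp add: vs.scale_right_diff_distrib)
  then show "scale c x - scale c (pr b x) \<in> P (\<not> b)" using pr_prop by (metis P_scale)
qed

lemma pr_0[simp]: "pr b 0 = 0" by (rule pr_id) simp

lemma LS_add: "\<forall>a\<in>UNIV. \<forall>b\<in>UNIV. \<forall>c\<in>UNIV. br (a + b) c = br a c + br b c \<and> br c (a + b) = br c a + br c b"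
  using LS unfolding lie_superalgebra_def by (elim conjE) assumption
lemma LS_scale: "\<forall>k. \<forall>a\<in>UNIV. \<forall>b\<in>UNIV. br (scale k a) b = scale k (br a b) \<and> br a (scale k b) = scale k (br a b)"
  using LS unfolding lie_superalgebra_def by (elim conjE) assumption
lemma br_addL: "br (a + b) c = br a c + br b c"
  using LS_add by blast
lemma br_addR: "br c (a + b) = br c a + br c b"
  using LS_add by blast
lemma br_scaleL: "br (scale k a) b = scale k (br a b)"
  using LS_scale by blast
lemma br_scaleR: "br a (scale k b) = scale k (br a b)"
  using LS_scale by blast
lemma br_0L[simp]: "br 0 b = 0" using br_addL[of 0 0 b] by simp
lemma br_0R[simp]: "br b 0 = 0" using br_addR[of b 0 0] by simp
lemma LS_par: "\<forall>i j a b. a \<in> P i \<longrightarrow> b \<in> P j \<longrightarrow> br a b \<in> P (i \<noteq> j)"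
  using LS unfolding lie_superalgebra_def by (elim conjE) assumption
lemma LS_anti: "\<forall>i j a b. a \<in> P i \<longrightarrow> b \<in> P j \<longrightarrow> br a b = - sgnb (i \<and> j) (br b a)"
  using LS unfolding lie_superalgebra_def by (elim conjE) assumption
lemma LS_jac: "\<forall>i j k a b c. a \<in> P i \<longrightarrow> b \<in> P j \<longrightarrow> c \<in> P k \<longrightarrow>
                 br a (br b c) = br (br a b) c + sgnb (i \<and> j) (br b (br a c))"
  using LS unfolding lie_superalgebra_def by (elim conjE) assumption
lemma br_par: "a \<in> P i \<Longrightarrow> b \<in> P j \<Longrightarrow> br a b \<in> P (i \<noteq> j)"
  using LS_par by blast
lemma br_anti: "a \<in> P i \<Longrightarrow> b \<in> P j \<Longrightarrow> br a b = - sgnb (i \<and> j) (br b a)"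
  using LS_anti by blast
lemma br_jac: "a \<in> P i \<Longrightarrow> b \<in> P j \<Longrightarrow> c \<in> P k \<Longrightarrow>
     br a (br b c) = br (br a b) c + sgnb (i \<and> j) (br b (br a c))"
  using LS_jac by blast

lemma scale_sgnb: "scale c (sgnb b x) = sgnb b (scale c x)"
  by (simp add: sgnb_def vs.scale_minus_right)
lemma sgnb_add: "sgnb b (x + y) = sgnb b x + sgnb b y"
  by (simp add: sgnb_def)
lemma sgnb_sgnb: "sgnb a (sgnb b x) = sgnb (a \<noteq> b) x"
  by (simp add: sgnb_def)


abbreviation bro where "bro \<equiv> brop scale G0 G1 br"
abbreviation op where "op \<equiv> opproj G0 G1"
abbreviation ubr where "ubr \<equiv> ubracket scale G0 G1 br"

lemma op_add: "op b (\<lambda>zs. A zs + B zs) xs = op b A xs + op b B xs"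
  by (induction xs arbitrary: b A B) (simp_all add: pr_add algebra_simps)

lemma op_scale: "op b (\<lambda>zs. scale c (A zs)) xs = scale c (op b A xs)"
  by (induction xs arbitrary: b A) (simp_all add: pr_scale vs.scale_right_distrib)

lemma op_zero: "op b (\<lambda>zs. 0) xs = 0"
  by (induction xs arbitrary: b) simp_all

lemma op_loc: "(\<And>zs. length zs = length xs \<Longrightarrow> A zs = B zs) \<Longrightarrow> op b A xs = op b B xs"
proof (induction xs arbitrary: b A B)
  case Nil
  then show ?case by simp
next
  case (Cons x xs)
  show ?case
    by (simp, rule arg_cong2[where f="(+)"]; rule Cons.IH; simp add: Cons.prems)
qed

lemma op_add_fun: "op b (\<lambda>zs. A zs + B zs) = (\<lambda>xs. op b A xs + op b B xs)"
  by (rule ext) (rule op_add)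
lemma op_scale_fun: "op b (\<lambda>zs. scale c (A zs)) = (\<lambda>xs. scale c (op b A xs))"
  by (rule ext) (rule op_scale)

lemma bro_addA: "bro p q (\<lambda>zs. A zs + A' zs) B ys = bro p q A B ys + bro p q A' B ys"
  by (induction ys arbitrary: p q A A' B)
     (simp_all add: br_addL sum_UNIV_bool vs.scale_right_distrib sgnb_add algebra_simps)

lemma bro_scaleA: "bro p q (\<lambda>zs. scale c (A zs)) B ys = scale c (bro p q A B ys)"
  by (induction ys arbitrary: p q A B)
     (simp_all add: br_scaleL sum_UNIV_bool vs.scale_right_distrib scale_sgnb vs.scale_minus_right vs.scale_right_diff_distrib mult.commute)

lemma bro_addB: "bro p q A (\<lambda>zs. B zs + B' zs) ys = bro p q A B ys + bro p q A B' ys"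
  by (induction ys arbitrary: p q A B B')
     (simp_all add: br_addR op_add_fun sum_UNIV_bool vs.scale_right_distrib sgnb_add algebra_simps)

lemma bro_scaleB: "bro p q A (\<lambda>zs. scale c (B zs)) ys = scale c (bro p q A B ys)"
  by (induction ys arbitrary: p q A B)
     (simp_all add: br_scaleR op_scale_fun sum_UNIV_bool vs.scale_right_distrib scale_sgnb vs.scale_minus_right vs.scale_right_diff_distrib mult.commute)

end


context LSA begin

lemma bro_loc:
  "length ys = p + q \<Longrightarrow> (\<And>zs. length zs = p \<Longrightarrow> A zs = A' zs) \<Longrightarrow>
   (\<And>zs. length zs = q \<Longrightarrow> B zs = B' zs) \<Longrightarrow> bro p q A B ys = bro p q A' B' ys"
proof (induction ys arbitrary: p q A A' B B')
  case Nil
  then show ?case by simp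
next
  case (Cons x ys)
  have q: "bro p (q - 1) A (\<lambda>zs. B (x # zs)) ys = bro p (q - 1) A' (\<lambda>zs. B' (x # zs)) ys"
    if "q \<noteq> 0" using that Cons by (intro Cons.IH) auto
  have p: "bro (p - 1) q (\<lambda>zs. A (pr i x # zs)) (op j B) ys
         = bro (p - 1) q (\<lambda>zs. A' (pr i x # zs)) (op j B') ys" if "p \<noteq> 0" for i j
    using that Cons by (intro Cons.IH op_loc) auto
  show ?case using p q by (cases p) simp_all
qed

lemma bro_zeroA:
  assumes "length ys = p + q" "\<And>zs. length zs = p \<Longrightarrow> A zs = 0"
  shows "bro p q A B ys = 0"
proof -
  have "bro p q A B ys = bro p q (\<lambda>zs. scale 0 (A zs)) B ys"
    using assms by (intro bro_loc) auto
  also have "\<dots> = scale 0 (bro p q A B ys)" by (rule bro_scaleA)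
  finally show ?thesis by simp
qed

lemma bro_zeroB:
  assumes "length ys = p + q" "\<And>zs. length zs = q \<Longrightarrow> B zs = 0"
  shows "bro p q A B ys = 0"
proof -
  have "bro p q A B ys = bro p q A (\<lambda>zs. scale 0 (B zs)) ys"
    using assms by (intro bro_loc) auto
  also have "\<dots> = scale 0 (bro p q A B ys)" by (rule bro_scaleB)
  finally show ?thesis by simp
qed

lemma ubr_Nil: "ubr u v [] = br (u []) (v [])"
  by (simp add: ubracket_def)

lemma ubr_addL: "ubr (\<lambda>zs. A zs + A' zs) B xs = ubr A B xs + ubr A' B xs"
  by (simp add: ubracket_def bro_addA sum.distrib)
lemma ubr_addR: "ubr A (\<lambda>zs. B zs + B' zs) xs = ubr A B xs + ubr A B' xs"
  by (simp add: ubracket_def bro_addB sum.distrib)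
lemma ubr_scaleL: "ubr (\<lambda>zs. scale c (A zs)) B xs = scale c (ubr A B xs)"
  by (simp add: ubracket_def bro_scaleA vs.scale_sum_right)
lemma ubr_scaleR: "ubr A (\<lambda>zs. scale c (B zs)) xs = scale c (ubr A B xs)"
  by (simp add: ubracket_def bro_scaleB vs.scale_sum_right)
lemma ubr_zeroL: "ubr (\<lambda>zs. 0) B xs = 0"
  using ubr_scaleL[of 0 "\<lambda>zs. 0" B xs] by simp
lemma ubr_zeroR: "ubr A (\<lambda>zs. 0) xs = 0"
  using ubr_scaleR[of A 0 "\<lambda>zs. 0" xs] by simp
lemma ubr_negL: "ubr (\<lambda>zs. - A zs) B xs = - ubr A B xs"
  using ubr_scaleL[of "-1" A B xs] by (simp add: vs.scale_minus_left)
lemma ubr_negR: "ubr A (\<lambda>zs. - B zs) xs = - ubr A B xs"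
  using ubr_scaleR[of A "-1" B xs] by (simp add: vs.scale_minus_left)
lemma ubr_sgnbL: "ubr (\<lambda>zs. sgnb b (A zs)) B xs = sgnb b (ubr A B xs)"
  by (cases b) (simp_all add: ubr_negL)
lemma ubr_sgnbR: "ubr A (\<lambda>zs. sgnb b (B zs)) xs = sgnb b (ubr A B xs)"
  by (cases b) (simp_all add: ubr_negR)

definition D where "D x u = (\<lambda>zs. scale (of_nat (Suc (length zs))) (u (x # zs)))"

lemma ubr_Cons:
  "ubr u v (x # ys) = scale (1 / of_nat (Suc (length ys)))
     (ubr u (D x v) ys
      + ubr (D (pr False x) u) (op False v) ys + ubr (D (pr False x) u) (op True v) ys
      + ubr (D (pr True x) u) (op False v) ys - ubr (D (pr True x) u) (op True v) ys)"
proof -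
  define n where "n = length ys"
  define T1 where "T1 p = (if Suc n - p = 0 then 0
        else scale (of_nat (Suc n - p)) (bro p (Suc n - p - 1) u (\<lambda>zs. v (x # zs)) ys))" for p
  define T2 where "T2 p = (if p = 0 then 0 else scale (of_nat p)
        (\<Sum>i\<in>(UNIV::bool set). \<Sum>j\<in>(UNIV::bool set).
             sgnb (i \<and> j) (bro (p - 1) (Suc n - p)
                (\<lambda>zs. u (pr i x # zs)) (op j v) ys)))" for p
  have "ubr u v (x # ys) = (\<Sum>p\<in>{0..Suc n}. scale (1 / of_nat (Suc n)) (T1 p + T2 p))"
    unfolding ubracket_def n_def T1_def T2_def
    by (intro sum.cong) auto
  also have "\<dots> = scale (1 / of_nat (Suc n)) (sum T1 {0..Suc n} + sum T2 {0..Suc n})"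
    by (simp only: vs.scale_right_distrib vs.scale_sum_right sum.distrib)
  also have "sum T1 {0..Suc n} = ubr u (D x v) ys"
  proof -
    have "sum T1 {0..Suc n} = sum T1 {0..n}"
      by (simp add: sum.atLeast0_atMost_Suc T1_def)
    also have "\<dots> = (\<Sum>p\<in>{0..n}. bro p (n - p) u (D x v) ys)"
    proof (rule sum.cong)
      fix p assume "p \<in> {0..n}"
      then have p: "p \<le> n" by simp
      have "bro p (n - p) u (D x v) ys
          = bro p (n - p) u (\<lambda>zs. scale (of_nat (Suc n - p)) (v (x # zs))) ys"
        using p by (intro bro_loc) (auto simp: n_def D_def Suc_diff_le)
      then show "T1 p = bro p (n - p) u (D x v) ys"
        using p by (simp add: T1_def bro_scaleB)
    qed simp
    also have "\<dots> = ubr u (D x v) ys" by (simp add: ubracket_def n_def)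
    finally show ?thesis .
  qed
  also have "sum T2 {0..Suc n} =
      ubr (D (pr False x) u) (op False v) ys + ubr (D (pr False x) u) (op True v) ys
      + ubr (D (pr True x) u) (op False v) ys - ubr (D (pr True x) u) (op True v) ys"
  proof -
    have "sum T2 {0..Suc n} = (\<Sum>p\<in>{0..n}. T2 (Suc p))"
      by (simp only: sum.atLeast0_atMost_Suc_shift) (simp add: T2_def)
    also have "\<dots> = (\<Sum>p\<in>{0..n}.
        bro p (n - p) (D (pr False x) u) (op False v) ys + bro p (n - p) (D (pr False x) u) (op True v) ys
      + bro p (n - p) (D (pr True x) u) (op False v) ys - bro p (n - p) (D (pr True x) u) (op True v) ys)"
    proof (rule sum.cong)
      fix p assume "p \<in> {0..n}"
      then have p: "p \<le> n" by simp
      have e: "bro p (n - p) (D (pr i x) u) (op j v) ys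
          = bro p (n - p) (\<lambda>zs. scale (of_nat (Suc p)) (u (pr i x # zs))) (op j v) ys" for i j
        using p by (intro bro_loc) (auto simp: n_def D_def)
      show "T2 (Suc p) = bro p (n - p) (D (pr False x) u) (op False v) ys + bro p (n - p) (D (pr False x) u) (op True v) ys
      + bro p (n - p) (D (pr True x) u) (op False v) ys - bro p (n - p) (D (pr True x) u) (op True v) ys"
        unfolding e using p
        by (simp add: T2_def bro_scaleA sum_UNIV_bool vs.scale_right_distrib vs.scale_right_diff_distrib)
    qed simp
    also have "\<dots> = ubr (D (pr False x) u) (op False v) ys + ubr (D (pr False x) u) (op True v) ys
      + ubr (D (pr True x) u) (op False v) ys - ubr (D (pr True x) u) (op True v) ys"
      by (simp add: ubracket_def n_def sum.distrib sum_subtractf)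
    finally show ?thesis .
  qed
  finally show ?thesis by (simp add: n_def algebra_simps)
qed

end



definition hom :: "'g::ab_group_add set \<Rightarrow> 'g set \<Rightarrow> 'g list \<Rightarrow> bool list \<Rightarrow> bool" where
  "hom G0 G1 xs es \<longleftrightarrow> length es = length xs \<and> (\<forall>i<length xs. xs ! i \<in> gpart G0 G1 (es ! i))"

lemma hom_Nil[simp]: "hom G0 G1 [] es \<longleftrightarrow> es = []"
  by (auto simp: hom_def)
lemma hom_Cons[simp]: "hom G0 G1 (x # xs) es \<longleftrightarrow> (\<exists>e es'. es = e # es' \<and> x \<in> gpart G0 G1 e \<and> hom G0 G1 xs es')"
  apply (cases es)
   apply (auto simp: hom_def)
  using less_Suc_eq_0_disj apply fastforce
  done
lemma hom_Cons2[simp]: "hom G0 G1 (x # xs) (e # es) \<longleftrightarrow> x \<in> gpart G0 G1 e \<and> hom G0 G1 xs es"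
  by simp

lemma parsum_Nil[simp]: "parsum [] = False" by (simp add: parsum_def)
lemma parsum_Cons[simp]: "parsum (e # es) = (e \<noteq> parsum es)" by (simp add: parsum_def)

lemma Upart_iff: "u \<in> Upart scale G0 G1 b \<longleftrightarrow> u \<in> Uspace scale \<and>
   (\<forall>xs es. hom G0 G1 xs es \<longrightarrow> u xs \<in> gpart G0 G1 (b \<noteq> parsum es))"
  unfolding Upart_def hom_def by auto

lemma Uspace_iff: "u \<in> Uspace scale \<longleftrightarrow>
     (\<forall>xs ys a b. u (xs @ (a + b) # ys) = u (xs @ a # ys) + u (xs @ b # ys)) \<and>
     (\<forall>xs ys c a. u (xs @ scale c a # ys) = scale c (u (xs @ a # ys))) \<and>
     finite {length xs | xs. u xs \<noteq> 0}"
  unfolding Uspace_def by simp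

context LSA begin

abbreviation U where "U \<equiv> Uspace scale"
abbreviation UP where "UP \<equiv> Upart scale G0 G1"
abbreviation hm where "hm \<equiv> hom G0 G1"

lemma U_add: "u \<in> U \<Longrightarrow> u (xs @ (a + b) # ys) = u (xs @ a # ys) + u (xs @ b # ys)"
  by (simp add: Uspace_iff)
lemma U_scale: "u \<in> U \<Longrightarrow> u (xs @ scale c a # ys) = scale c (u (xs @ a # ys))"
  by (simp add: Uspace_iff)
lemma U_fin: "u \<in> U \<Longrightarrow> finite {length xs | xs. u xs \<noteq> 0}"
  by (simp add: Uspace_iff)
lemma U_add0: "u \<in> U \<Longrightarrow> u ((a + b) # ys) = u (a # ys) + u (b # ys)"
  using U_add[of u "[]"] by simp
lemma U_scale0: "u \<in> U \<Longrightarrow> u (scale c a # ys) = scale c (u (a # ys))"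
  using U_scale[of u "[]"] by simp
lemma U_zero0: "u \<in> U \<Longrightarrow> u (0 # ys) = 0"
  using U_add0[of u 0 0 ys] by simp
lemma U_split: "u \<in> U \<Longrightarrow> u (x # ys) = u (pr False x # ys) + u (pr True x # ys)"
  using U_add0[of u "pr False x" "pr True x" ys] by (simp add: pr_sum)

lemma U_bound: "u \<in> U \<Longrightarrow> \<exists>M. \<forall>xs. M < length xs \<longrightarrow> u xs = 0"
proof -
  assume "u \<in> U"
  then have "finite {length xs | xs. u xs \<noteq> 0}" by (rule U_fin)
  then obtain M where "\<forall>n\<in>{length xs | xs. u xs \<noteq> 0}. n \<le> M"
    using finite_nat_set_iff_bounded_le by blast
  then show ?thesis by (intro exI[of _ M]) force
qed

lemma U_of_bound:
  assumes "\<forall>xs ys a b. u (xs @ (a + b) # ys) = u (xs @ a # ys) + u (xs @ b # ys)"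
    "\<forall>xs ys c a. u (xs @ scale c a # ys) = scale c (u (xs @ a # ys))"
    "\<And>xs. M < length xs \<Longrightarrow> u xs = 0"
  shows "u \<in> U"
proof -
  have "{length xs | xs. u xs \<noteq> 0} \<subseteq> {..M}" using assms(3) by force
  then have "finite {length xs | xs. u xs \<noteq> 0}" using finite_subset by blast
  then show ?thesis using assms unfolding Uspace_iff by blast
qed

lemma U_zero[simp]: "(\<lambda>zs. 0) \<in> U"
  by (rule U_of_bound[where M=0]) auto

lemma U_plus: "u \<in> U \<Longrightarrow> v \<in> U \<Longrightarrow> (\<lambda>zs. u zs + v zs) \<in> U"
proof -
  assume u: "u \<in> U" and v: "v \<in> U"
  obtain M1 where M1: "\<forall>xs. M1 < length xs \<longrightarrow> u xs = 0" using U_bound[OF u] by blast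
  obtain M2 where M2: "\<forall>xs. M2 < length xs \<longrightarrow> v xs = 0" using U_bound[OF v] by blast
  show ?thesis
    by (rule U_of_bound[where M="M1 + M2"])
       (use M1 M2 U_add[OF u] U_add[OF v] U_scale[OF u] U_scale[OF v] in
         \<open>auto simp: algebra_simps vs.scale_right_distrib\<close>)
qed

lemma U_scl: "u \<in> U \<Longrightarrow> (\<lambda>zs. scale c (u zs)) \<in> U"
proof -
  assume u: "u \<in> U"
  obtain M1 where M1: "\<forall>xs. M1 < length xs \<longrightarrow> u xs = 0" using U_bound[OF u] by blast
  show ?thesis
    by (rule U_of_bound[where M="M1"])
       (use M1 U_add[OF u] U_scale[OF u] in
         \<open>auto simp: algebra_simps vs.scale_right_distrib mult.commute\<close>)
qed

lemma U_sh: "u \<in> U \<Longrightarrow> (\<lambda>zs. u (x # zs)) \<in> U"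
proof -
  assume u: "u \<in> U"
  obtain M1 where M1: "\<forall>xs. M1 < length xs \<longrightarrow> u xs = 0" using U_bound[OF u] by blast
  show ?thesis
  proof (rule U_of_bound[where M="M1"])
    show "\<forall>xs ys a b. u (x # xs @ (a + b) # ys) = u (x # xs @ a # ys) + u (x # xs @ b # ys)"
      using U_add[OF u, of "x # _"] by simp
    show "\<forall>xs ys c a. u (x # xs @ scale c a # ys) = scale c (u (x # xs @ a # ys))"
      using U_scale[OF u, of "x # _"] by simp
  qed (use M1 in auto)
qed

lemma U_D: "u \<in> U \<Longrightarrow> D x u \<in> U"
proof -
  assume u: "u \<in> U"
  obtain M1 where M1: "\<forall>xs. M1 < length xs \<longrightarrow> u xs = 0" using U_bound[OF u] by blast
  show ?thesis
  proof (rule U_of_bound[where M="M1"])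
    show "\<forall>xs ys a b. D x u (xs @ (a + b) # ys) = D x u (xs @ a # ys) + D x u (xs @ b # ys)"
      using U_add[OF u, of "x # _"] by (simp add: D_def vs.scale_right_distrib)
    show "\<forall>xs ys c a. D x u (xs @ scale c a # ys) = scale c (D x u (xs @ a # ys))"
      using U_scale[OF u, of "x # _"] by (simp add: D_def mult.commute)
  qed (use M1 in \<open>auto simp: D_def\<close>)
qed

lemma D_zero: "u \<in> U \<Longrightarrow> D 0 u = (\<lambda>zs. 0)"
  by (simp add: D_def U_zero0)

lemma UP_U: "u \<in> UP b \<Longrightarrow> u \<in> U" by (simp add: Upart_iff)
lemma UP_hom: "u \<in> UP b \<Longrightarrow> hm xs es \<Longrightarrow> u xs \<in> P (b \<noteq> parsum es)"
  by (simp add: Upart_iff)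
lemma UP_Nil: "u \<in> UP b \<Longrightarrow> u [] \<in> P b"
  using UP_hom[of u b "[]" "[]"] by simp

lemma UP_sh: "u \<in> UP b \<Longrightarrow> x \<in> P e \<Longrightarrow> (\<lambda>zs. u (x # zs)) \<in> UP (b \<noteq> e)"
proof -
  assume u: "u \<in> UP b" and x: "x \<in> P e"
  have "u (x # xs) \<in> P ((b \<noteq> e) \<noteq> parsum es)" if "hm xs es" for xs es
  proof -
    have "u (x # xs) \<in> P (b \<noteq> parsum (e # es))" using UP_hom[OF u, of "x # xs" "e # es"] that x by simp
    moreover have "(b \<noteq> parsum (e # es)) = ((b \<noteq> e) \<noteq> parsum es)" by auto
    ultimately show ?thesis by simp
  qed
  then show ?thesis using U_sh[OF UP_U[OF u]] by (simp add: Upart_iff)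
qed

lemma UP_D: "u \<in> UP b \<Longrightarrow> x \<in> P e \<Longrightarrow> D x u \<in> UP (b \<noteq> e)"
proof -
  assume u: "u \<in> UP b" and x: "x \<in> P e"
  have "D x u xs \<in> P ((b \<noteq> e) \<noteq> parsum es)" if "hm xs es" for xs es
    using UP_sh[OF u x] that unfolding D_def by (auto simp: Upart_iff)
  then show ?thesis using U_D[OF UP_U[OF u]] by (simp add: Upart_iff)
qed

lemma UP_zero[simp]: "(\<lambda>zs. 0) \<in> UP b" by (simp add: Upart_iff)

lemma UP_plus: "u \<in> UP b \<Longrightarrow> v \<in> UP b \<Longrightarrow> (\<lambda>zs. u zs + v zs) \<in> UP b"
  by (auto simp: Upart_iff U_plus)

lemma UP_scl: "u \<in> UP b \<Longrightarrow> (\<lambda>zs. scale c (u zs)) \<in> UP b"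
  by (auto simp: Upart_iff U_scl)

lemma op_id: "A \<in> UP b \<Longrightarrow> op b A xs = A xs \<and> op (\<not> b) A xs = 0"
proof (induction xs arbitrary: b A)
  case Nil
  then show ?case using UP_Nil[OF Nil.prems] by (simp add: pr_id pr_zero')
next
  case (Cons x xs)
  have A: "A \<in> U" using Cons.prems by (rule UP_U)
  have F: "(\<lambda>zs. A (pr False x # zs)) \<in> UP b"
    using UP_sh[OF Cons.prems, of "pr False x" False] by simp
  have T: "(\<lambda>zs. A (pr True x # zs)) \<in> UP (\<not> b)"
    using UP_sh[OF Cons.prems, of "pr True x" True] by simp
  note IF = Cons.IH[OF F] and IT = Cons.IH[OF T]
  show ?case using IF IT U_split[OF A, of x xs] by simp
qed

lemma op_id_fun: "A \<in> UP b \<Longrightarrow> op b A = A"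
  using op_id by blast
lemma op_zero_fun: "A \<in> UP b \<Longrightarrow> op (\<not> b) A = (\<lambda>zs. 0)"
  using op_id by blast

lemma op_U: "A \<in> U \<Longrightarrow> op b A \<in> U"
proof -
  assume A: "A \<in> U"
  obtain M1 where M1: "\<forall>xs. M1 < length xs \<longrightarrow> A xs = 0" using U_bound[OF A] by blast
  have add: "op b A (xs @ (a + c) # ys) = op b A (xs @ a # ys) + op b A (xs @ c # ys)"
    if "A \<in> U" for xs ys a c b A
    using that
  proof (induction xs arbitrary: b A)
    case Nil
    then show ?case by (simp add: pr_add U_add0 op_add algebra_simps)
  next
    case (Cons x xs)
    then show ?case by (simp add: U_sh algebra_simps)
  qed
  have scl: "op b A (xs @ scale c a # ys) = scale c (op b A (xs @ a # ys))"
    if "A \<in> U" for xs ys a c b A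
    using that
  proof (induction xs arbitrary: b A)
    case Nil
    then show ?case by (simp add: pr_scale U_scale0 op_scale vs.scale_right_distrib)
  next
    case (Cons x xs)
    then show ?case by (simp add: U_sh vs.scale_right_distrib)
  qed
  have z: "op b A xs = 0" if "M1 < length xs" for xs
  proof -
    have "op b A xs = op b (\<lambda>zs. 0) xs" using M1 that by (intro op_loc) auto
    then show ?thesis by (simp add: op_zero)
  qed
  show ?thesis
    by (rule U_of_bound[where M=M1]) (use add[OF A] scl[OF A] z in auto)
qed

lemma op_UP: "A \<in> U \<Longrightarrow> op b A \<in> UP b"
proof -
  assume A: "A \<in> U"
  have "op b A xs \<in> P (b \<noteq> parsum es)" if "hm xs es" "A \<in> U" for xs es b A
    using that
  proof (induction xs arbitrary: es b A)
    case Nil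
    then show ?case by simp
  next
    case (Cons x xs)
    obtain e es' where e: "es = e # es'" "x \<in> P e" "hm xs es'" using Cons.prems by auto
    have sF: "(\<lambda>zs. A (pr False x # zs)) \<in> U" and sT: "(\<lambda>zs. A (pr True x # zs)) \<in> U"
      using Cons.prems by (simp_all add: U_sh)
    show ?case
    proof (cases e)
      case True
      then have "pr False x = 0" "pr True x = x" using e by (simp_all add: pr_id pr_zero)
      then show ?thesis using Cons.IH[OF e(3) sT, of "\<not> b"] e True U_zero0[OF Cons.prems(2)]
        by (simp add: op_zero)
    next
      case False
      then have "pr False x = x" "pr True x = 0" using e by (simp_all add: pr_id pr_zero)
      then show ?thesis using Cons.IH[OF e(3) sF, of b] e False U_zero0[OF Cons.prems(2)]
        by (simp add: op_zero)
    qed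
  qed
  then show ?thesis using op_U[OF A] A by (simp add: Upart_iff)
qed

lemma op_sum: "A \<in> U \<Longrightarrow> op False A xs + op True A xs = A xs"
proof (induction xs arbitrary: A)
  case Nil
  then show ?case by (simp add: pr_sum)
next
  case (Cons x xs)
  have sF: "(\<lambda>zs. A (pr False x # zs)) \<in> U" and sT: "(\<lambda>zs. A (pr True x # zs)) \<in> U"
    using Cons.prems by (simp_all add: U_sh)
  have "op False A (x # xs) + op True A (x # xs)
     = (op False (\<lambda>zs. A (pr False x # zs)) xs + op True (\<lambda>zs. A (pr False x # zs)) xs)
     + (op False (\<lambda>zs. A (pr True x # zs)) xs + op True (\<lambda>zs. A (pr True x # zs)) xs)"
    by (simp add: algebra_simps)
  also have "\<dots> = A (pr False x # xs) + A (pr True x # xs)" using Cons.IH[OF sF] Cons.IH[OF sT] by simp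
  also have "\<dots> = A (x # xs)" by (rule U_split[OF Cons.prems, symmetric])
  finally show ?case .
qed

end


context LSA begin

lemma ubr_Cons_hom:
  assumes u: "u \<in> U" and v: "v \<in> UP j" and x: "x \<in> P e"
  shows "ubr u v (x # ys) = scale (1 / of_nat (Suc (length ys)))
     (ubr u (D x v) ys + sgnb (e \<and> j) (ubr (D x u) v ys))"
proof -
  have o1: "op j v = v" and o2: "op (\<not> j) v = (\<lambda>zs. 0)"
    using op_id_fun[OF v] op_zero_fun[OF v] by auto
  have p1: "pr e x = x" and p2: "pr (\<not> e) x = 0" using x by (simp_all add: pr_id pr_zero')
  have d: "D 0 u = (\<lambda>zs. 0)" using u by (rule D_zero)
  show ?thesis
    by (cases e; cases j) (use o1 o2 p1 p2 d in \<open>simp_all add: ubr_Cons ubr_zeroL ubr_zeroR\<close>)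
qed

lemma D_ubr:
  assumes u: "u \<in> U" and v: "v \<in> UP j" and x: "x \<in> P e"
  shows "D x (ubr u v) = (\<lambda>zs. ubr u (D x v) zs + sgnb (e \<and> j) (ubr (D x u) v zs))"
proof
  fix zs :: "'g list"
  have ne: "(of_nat (Suc (length zs)) :: 'k) \<noteq> 0" by (rule of_nat_neq_0)
  show "D x (ubr u v) zs = ubr u (D x v) zs + sgnb (e \<and> j) (ubr (D x u) v zs)"
    unfolding D_def[of x "ubr u v"] ubr_Cons_hom[OF u v x]
    using ne by simp
qed

lemma D_add: "v \<in> U \<Longrightarrow> D (a + c) v = (\<lambda>zs. D a v zs + D c v zs)"
  by (simp add: D_def U_add0 vs.scale_right_distrib)
lemma D_scl: "v \<in> U \<Longrightarrow> D (scale k a) v = (\<lambda>zs. scale k (D a v zs))"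
  by (simp add: D_def U_scale0 mult.commute)

lemma ubr_U: assumes "u \<in> U" "v \<in> U" shows "ubr u v \<in> U"
proof -
  have add: "ubr u v (xs @ (a + c) # ys) = ubr u v (xs @ a # ys) + ubr u v (xs @ c # ys)"
    if "u \<in> U" "v \<in> U" for xs ys a c u v
    using that
  proof (induction xs arbitrary: u v)
    case Nil
    then show ?case
      by (simp add: ubr_Cons pr_add D_add U_D op_U ubr_addL ubr_addR
           vs.scale_right_distrib vs.scale_right_diff_distrib algebra_simps)
  next
    case (Cons x xs)
    then show ?case
      by (simp add: ubr_Cons U_D op_U vs.scale_right_distrib vs.scale_right_diff_distrib algebra_simps)
  qed
  have scl: "ubr u v (xs @ scale k a # ys) = scale k (ubr u v (xs @ a # ys))"
    if "u \<in> U" "v \<in> U" for xs ys a k u v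
    using that
  proof (induction xs arbitrary: u v)
    case Nil
    then show ?case
      by (simp add: ubr_Cons pr_scale D_scl U_D op_U ubr_scaleL ubr_scaleR
           vs.scale_right_distrib vs.scale_right_diff_distrib mult.commute)
  next
    case (Cons x xs)
    then show ?case
      by (simp add: ubr_Cons U_D op_U vs.scale_right_distrib vs.scale_right_diff_distrib mult.commute)
  qed
  obtain M1 where M1: "\<forall>xs. M1 < length xs \<longrightarrow> u xs = 0" using U_bound[OF assms(1)] by blast
  obtain M2 where M2: "\<forall>xs. M2 < length xs \<longrightarrow> v xs = 0" using U_bound[OF assms(2)] by blast
  have z: "ubr u v xs = 0" if "M1 + M2 < length xs" for xs
    unfolding ubracket_def
  proof (rule sum.neutral, rule ballI)
    fix p assume "p \<in> {0..length xs}"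
    then have p: "p \<le> length xs" by simp
    show "bro p (length xs - p) u v xs = 0"
    proof (cases "M1 < p")
      case True
      then show ?thesis using p M1 by (intro bro_zeroA) auto
    next
      case False
      then show ?thesis using p M2 that by (intro bro_zeroB) auto
    qed
  qed
  show ?thesis
    by (rule U_of_bound[where M="M1 + M2"]) (use add[OF assms] scl[OF assms] z in auto)
qed

lemma ubr_UP: assumes "u \<in> UP i" "v \<in> UP j" shows "ubr u v \<in> UP (i \<noteq> j)"
proof -
  have "ubr u v xs \<in> P ((i \<noteq> j) \<noteq> parsum es)"
    if "hm xs es" "u \<in> UP i" "v \<in> UP j" for xs es u v i j
    using that
  proof (induction xs arbitrary: es u v i j)
    case Nil
    then show ?case using br_par[OF UP_Nil[OF Nil.prems(2)] UP_Nil[OF Nil.prems(3)]]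
      by (simp add: ubr_Nil)
  next
    case (Cons x xs)
    obtain e es' where e: "es = e # es'" "x \<in> P e" "hm xs es'" using Cons.prems by auto
    have 1: "ubr u (D x v) xs \<in> P ((i \<noteq> (j \<noteq> e)) \<noteq> parsum es')"
      using Cons.IH[OF e(3) Cons.prems(2) UP_D[OF Cons.prems(3) e(2)]] .
    have 2: "ubr (D x u) v xs \<in> P (((i \<noteq> e) \<noteq> j) \<noteq> parsum es')"
      using Cons.IH[OF e(3) UP_D[OF Cons.prems(2) e(2)] Cons.prems(3)] .
    have b1: "((i \<noteq> (j \<noteq> e)) \<noteq> parsum es') = ((i \<noteq> j) \<noteq> parsum es)" using e by auto
    have b2: "(((i \<noteq> e) \<noteq> j) \<noteq> parsum es') = ((i \<noteq> j) \<noteq> parsum es)" using e by auto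
    have "ubr u (D x v) xs + sgnb (e \<and> j) (ubr (D x u) v xs) \<in> P ((i \<noteq> j) \<noteq> parsum es)"
      using 1 2 unfolding b1 b2 by blast
    then show ?case
      using ubr_Cons_hom[OF UP_U[OF Cons.prems(2)] Cons.prems(3) e(2)] by auto
  qed
  then show ?thesis using ubr_U[OF UP_U[OF assms(1)] UP_U[OF assms(2)]] assms
    by (simp add: Upart_iff)
qed

lemma ubr_anti:
  "u \<in> UP i \<Longrightarrow> v \<in> UP j \<Longrightarrow> ubr u v xs = - sgnb (i \<and> j) (ubr v u xs)"
proof (induction xs arbitrary: u v i j)
  case Nil
  then show ?case by (simp add: ubr_Nil br_anti UP_Nil)
next
  case (Cons x xs)
  note u = Cons.prems(1) and v = Cons.prems(2)
  have hom: "ubr u v (y # xs) = - sgnb (i \<and> j) (ubr v u (y # xs))" if y: "y \<in> P e" for y e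
  proof -
    have 1: "ubr u (D y v) xs = - sgnb (i \<and> (j \<noteq> e)) (ubr (D y v) u xs)"
      by (rule Cons.IH[OF u UP_D[OF v y]])
    have 2: "ubr (D y u) v xs = - sgnb ((i \<noteq> e) \<and> j) (ubr v (D y u) xs)"
      by (rule Cons.IH[OF UP_D[OF u y] v])
    show ?thesis
      unfolding ubr_Cons_hom[OF UP_U[OF u] v y] ubr_Cons_hom[OF UP_U[OF v] u y] 1 2
      by (cases i; cases j; cases e) (simp_all add: vs.scale_minus_right vs.scale_right_distrib algebra_simps)
  qed
  have Uuv: "ubr u v \<in> U" and Uvu: "ubr v u \<in> U"
    using ubr_U UP_U u v by blast+
  show ?case
    unfolding U_split[OF Uuv, of x] U_split[OF Uvu, of x]
    using hom[of "pr False x" False] hom[of "pr True x" True]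
    by (simp add: sgnb_add)
qed

end


context LSA begin

lemma ubr_jac:
  "u \<in> UP i \<Longrightarrow> v \<in> UP j \<Longrightarrow> w \<in> UP k \<Longrightarrow>
   ubr u (ubr v w) xs = ubr (ubr u v) w xs + sgnb (i \<and> j) (ubr v (ubr u w) xs)"
proof (induction xs arbitrary: u v w i j k)
  case Nil
  then show ?case
    using br_jac[OF UP_Nil[OF Nil.prems(1)] UP_Nil[OF Nil.prems(2)] UP_Nil[OF Nil.prems(3)]]
    by (simp add: ubr_Nil)
next
  case (Cons x xs)
  note u = Cons.prems(1) and v = Cons.prems(2) and w = Cons.prems(3)
  have Uu: "u \<in> U" and Uv: "v \<in> U" and Uw: "w \<in> U" using u v w by (simp_all add: UP_U)
  have hom: "ubr u (ubr v w) (y # xs) = ubr (ubr u v) w (y # xs) + sgnb (i \<and> j) (ubr v (ubr u w) (y # xs))"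
    if y: "y \<in> P e" for y e
  proof -
    have vw: "ubr v w \<in> UP (j \<noteq> k)" by (rule ubr_UP[OF v w])
    have uv: "ubr u v \<in> UP (i \<noteq> j)" by (rule ubr_UP[OF u v])
    have uw: "ubr u w \<in> UP (i \<noteq> k)" by (rule ubr_UP[OF u w])
    have Du: "D y u \<in> UP (i \<noteq> e)" by (rule UP_D[OF u y])
    have Dv: "D y v \<in> UP (j \<noteq> e)" by (rule UP_D[OF v y])
    have Dw: "D y w \<in> UP (k \<noteq> e)" by (rule UP_D[OF w y])
    have IH1: "ubr u (ubr v (D y w)) xs = ubr (ubr u v) (D y w) xs + sgnb (i \<and> j) (ubr v (ubr u (D y w)) xs)"
      by (rule Cons.IH[OF u v Dw])
    have IH2: "ubr u (ubr (D y v) w) xs = ubr (ubr u (D y v)) w xs + sgnb (i \<and> (j \<noteq> e)) (ubr (D y v) (ubr u w) xs)"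
      by (rule Cons.IH[OF u Dv w])
    have IH3: "ubr (D y u) (ubr v w) xs = ubr (ubr (D y u) v) w xs + sgnb ((i \<noteq> e) \<and> j) (ubr v (ubr (D y u) w) xs)"
      by (rule Cons.IH[OF Du v w])
    have L: "ubr u (ubr v w) (y # xs) = scale (1 / of_nat (Suc (length xs)))
        (ubr u (ubr v (D y w)) xs + sgnb (e \<and> k) (ubr u (ubr (D y v) w) xs)
         + sgnb (e \<and> (j \<noteq> k)) (ubr (D y u) (ubr v w) xs))"
      unfolding ubr_Cons_hom[OF Uu vw y] D_ubr[OF Uv w y] ubr_addR ubr_sgnbR ..
    have R1: "ubr (ubr u v) w (y # xs) = scale (1 / of_nat (Suc (length xs)))
        (ubr (ubr u v) (D y w) xs + sgnb (e \<and> k) (ubr (ubr u (D y v)) w xs)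
         + sgnb (e \<and> k) (sgnb (e \<and> j) (ubr (ubr (D y u) v) w xs)))"
      unfolding ubr_Cons_hom[OF ubr_U[OF Uu Uv] w y] D_ubr[OF Uu v y] ubr_addL ubr_sgnbL sgnb_add
      by (simp add: add.assoc)
    have R2: "ubr v (ubr u w) (y # xs) = scale (1 / of_nat (Suc (length xs)))
        (ubr v (ubr u (D y w)) xs + sgnb (e \<and> k) (ubr v (ubr (D y u) w) xs)
         + sgnb (e \<and> (i \<noteq> k)) (ubr (D y v) (ubr u w) xs))"
      unfolding ubr_Cons_hom[OF Uv uw y] D_ubr[OF Uu w y] ubr_addR ubr_sgnbR ..
    show ?thesis
      unfolding L R1 R2 IH1 IH2 IH3
      by (cases i; cases j; cases k; cases e)
         (simp_all add: vs.scale_minus_right vs.scale_right_distrib vs.scale_right_diff_distrib algebra_simps)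
  qed
  have U1: "ubr u (ubr v w) \<in> U" and U2: "ubr (ubr u v) w \<in> U" and U3: "ubr v (ubr u w) \<in> U"
    using Uu Uv Uw by (simp_all add: ubr_U)
  have "ubr u (ubr v w) (x # xs) = ubr u (ubr v w) (pr False x # xs) + ubr u (ubr v w) (pr True x # xs)"
    by (rule U_split[OF U1])
  also have "\<dots> = (ubr (ubr u v) w (pr False x # xs) + ubr (ubr u v) w (pr True x # xs))
     + sgnb (i \<and> j) (ubr v (ubr u w) (pr False x # xs) + ubr v (ubr u w) (pr True x # xs))"
    using hom[of "pr False x" False] hom[of "pr True x" True] by (simp add: sgnb_add algebra_simps)
  also have "\<dots> = ubr (ubr u v) w (x # xs) + sgnb (i \<and> j) (ubr v (ubr u w) (x # xs))"
    using U_split[OF U2, of x xs] U_split[OF U3, of x xs] by simp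
  finally show ?case .
qed

lemma U_vs: "vector_space (uscale scale)"
  by unfold_locales
     (simp_all add: uscale_def fun_eq_iff vs.scale_right_distrib vs.scale_left_distrib)

lemma UP_subspace: "module.subspace (uscale scale) (UP b)"
proof -
  interpret uv: vector_space "uscale scale" by (rule U_vs)
  show ?thesis
  proof (rule uv.subspaceI)
  show "0 \<in> UP b" using UP_zero[of b] by (simp add: zero_fun_def)
  fix x y assume "x \<in> UP b" "y \<in> UP b"
  then show "x + y \<in> UP b" using UP_plus[of x b y] by (simp add: plus_fun_def)
next
  fix c x assume "x \<in> UP b"
  then show "uscale scale c x \<in> UP b" using UP_scl[of x b c] by (simp add: uscale_def)
qed
qed

lemma UP_inter: "UP False \<inter> UP True = {0}"
proof
  show "{0} \<subseteq> UP False \<inter> UP True" using UP_zero by (simp add: zero_fun_def)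
  show "UP False \<inter> UP True \<subseteq> {0}"
  proof
    fix u assume "u \<in> UP False \<inter> UP True"
    then have a: "u \<in> UP False" and b: "u \<in> UP True" by auto
    have "u xs = 0" for xs
      using op_id[OF a, of xs] op_id[OF b, of xs] by simp
    then show "u \<in> {0}" by (simp add: fun_eq_iff)
  qed
qed

lemma U_decomp: "U = {a + b | a b. a \<in> UP False \<and> b \<in> UP True}"
proof
  show "U \<subseteq> {a + b | a b. a \<in> UP False \<and> b \<in> UP True}"
  proof
    fix u assume u: "u \<in> U"
    have "u = op False u + op True u" using op_sum[OF u] by (simp add: fun_eq_iff)
    then show "u \<in> {a + b | a b. a \<in> UP False \<and> b \<in> UP True}"
      using op_UP[OF u] by blast
  qed
  show "{a + b | a b. a \<in> UP False \<and> b \<in> UP True} \<subseteq> U"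
    using U_plus UP_U by (fastforce simp: plus_fun_def)
qed

lemma gpart_UP: "gpart (UP False) (UP True) i = UP i"
  by (cases i) (simp_all add: gpart_def)

lemma sgnb_fun: "sgnb b (f :: 'a \<Rightarrow> 'g) = (\<lambda>xs. sgnb b (f xs))"
  by (cases b) (simp_all add: fun_eq_iff)

lemma main: "lie_superalgebra (uscale scale) U (UP False) (UP True) ubr"
  unfolding lie_superalgebra_def gpart_UP
proof (intro conjI allI ballI impI)
  show "vector_space (uscale scale)" by (rule U_vs)
  show "module.subspace (uscale scale) (UP False)" by (rule UP_subspace)
  show "module.subspace (uscale scale) (UP True)" by (rule UP_subspace)
  show "UP False \<inter> UP True = {0}" by (rule UP_inter)
  show "U = {a + b | a b. a \<in> UP False \<and> b \<in> UP True}" by (rule U_decomp)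
  fix a b assume a: "a \<in> U" and b: "b \<in> U"
  show "ubr a b \<in> U" using a b by (rule ubr_U)
  fix c
  show "ubr (a + b) c = ubr a c + ubr b c"
    by (simp add: fun_eq_iff plus_fun_def ubr_addL)
  show "ubr c (a + b) = ubr c a + ubr c b"
    by (simp add: fun_eq_iff plus_fun_def ubr_addR)
next
  fix k a b
  show "ubr (uscale scale k a) b = uscale scale k (ubr a b)"
    by (simp add: fun_eq_iff uscale_def ubr_scaleL)
  show "ubr a (uscale scale k b) = uscale scale k (ubr a b)"
    by (simp add: fun_eq_iff uscale_def ubr_scaleR)
next
  fix i j a b assume "a \<in> UP i" "b \<in> UP j"
  then show "ubr a b \<in> UP (i \<noteq> j)" by (rule ubr_UP)
next
  fix i j a b assume "a \<in> UP i" "b \<in> UP j"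
  then show "ubr a b = - sgnb (i \<and> j) (ubr b a)"
    by (simp add: fun_eq_iff sgnb_fun ubr_anti[of a i b j])
next
  fix i j k a b c assume "a \<in> UP i" "b \<in> UP j" "c \<in> UP k"
  then show "ubr a (ubr b c) = ubr (ubr a b) c + sgnb (i \<and> j) (ubr b (ubr a c))"
    by (simp add: fun_eq_iff sgnb_fun ubr_jac[of a i b j c k])
qed

end

theorem proposition4p1:
  fixes scale :: "'k::field_char_0 \<Rightarrow> 'g::ab_group_add \<Rightarrow> 'g"
    and G0 G1 :: "'g set" and br :: "'g \<Rightarrow> 'g \<Rightarrow> 'g"
  assumes "lie_superalgebra scale UNIV G0 G1 br"
  shows "lie_superalgebra (uscale scale) (Uspace scale)
           (Upart scale G0 G1 False) (Upart scale G0 G1 True) (ubracket scale G0 G1 br)"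
proof -
  interpret LSA scale G0 G1 br using assms by unfold_locales
  show ?thesis by (rule main)
qed


end
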